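(* Let $(X,V,v)$ be a measure space over a prering $V$ and $Y$ a Banach space. Let $G$ be the set of nonnegative $g\in L(v,\mathbb R)$ which are almost-everywhere limits of an increasing sequence of functions from $S(V,\mathbb R)$. A function $f:X\to Y$ belongs to $L(v,Y)$ if and only if there exist $s_n\in S(V,Y)$ and $g\in G$ such that $s_n(x)\to f(x)$ almost everywhere and $|s_n(x)|\le g(x)$ for all $n$ and almost all $x\in X$.
   Context: Measure space: $X$ a set, $V$ a prering of subsets of $X$ (i.e. $\emptyset\in V$ and for $A,B\in V$ the sets $A\cap B$, $A\setminus B$ are finite disjoint unions of members of $V$), and $v:V\to[0,\infty)$ countably additive. $S(V,Y)$ is the space of simple functions $h=\sum_{i=1}^k y_ic_{A_i}$ with $y_i\in Y$, $A_i\in V$ pairwise disjoint; $\int h\,dv=\sum y_iv(A_i)$, $\|h\|=\int|h|\,dv$. A set $A$ is null if for every $\varepsilon>0$ it is covered by countably many $A_t\in V$ with $\sum v(A_t)<\varepsilon$; "almost everywhere" means outside a null set. A basic sequence is $s_n=h_1+\dots+h_n$ with $h_n\in S(V,Y)$, $\|h_n\|\le M4^{-n}$. $L(v,Y)$ is the set of $f:X\to Y$ that are almost-everywhere limits of basic sequences, with $\int f\,dv=\lim\int s_n\,dv$. *)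

theory Defs
  imports "HOL-Analysis.Analysis"
begin

text \<open>The set X is the universe of the type 'a; subsets of X are elements of type 'a set.\<close>

definition prering :: "'a set set \<Rightarrow> bool" where
  "prering V \<longleftrightarrow> {} \<in> V \<and>
     (\<forall>A\<in>V. \<forall>B\<in>V.
        (\<exists>F. finite F \<and> F \<subseteq> V \<and> disjoint F \<and> A \<inter> B = \<Union>F) \<and>
        (\<exists>F. finite F \<and> F \<subseteq> V \<and> disjoint F \<and> A - B = \<Union>F))"

definition countably_additive_on :: "'a set set \<Rightarrow> ('a set \<Rightarrow> real) \<Rightarrow> bool" where
  "countably_additive_on V v \<longleftrightarrow>
     (\<forall>A :: nat \<Rightarrow> 'a set. range A \<subseteq> V \<longrightarrow> disjoint_family A \<longrightarrow> \<Union>(range A) \<in> V \<longrightarrow>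
        (\<lambda>n. v (A n)) sums v (\<Union>(range A)))"

definition measure_space_pr :: "'a set set \<Rightarrow> ('a set \<Rightarrow> real) \<Rightarrow> bool" where
  "measure_space_pr V v \<longleftrightarrow> prering V \<and> (\<forall>A\<in>V. 0 \<le> v A) \<and> countably_additive_on V v"

definition simple_rep :: "'a set set \<Rightarrow> ('a \<Rightarrow> 'b::real_normed_vector) \<Rightarrow> nat \<Rightarrow> (nat \<Rightarrow> 'b) \<Rightarrow> (nat \<Rightarrow> 'a set) \<Rightarrow> bool" where
  "simple_rep V h k y A \<longleftrightarrow> (\<forall>i<k. A i \<in> V) \<and>
     (\<forall>i<k. \<forall>j<k. i \<noteq> j \<longrightarrow> A i \<inter> A j = {}) \<and>
     h = (\<lambda>x. \<Sum>i<k. indicator (A i) x *\<^sub>R y i)"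

definition simple_funs :: "'a set set \<Rightarrow> ('a \<Rightarrow> 'b::real_normed_vector) set" where
  "simple_funs V = {h. \<exists>k y A. simple_rep V h k y A}"

text \<open>Integral of a simple function: sum_i y_i v(A_i) (independent of the representation).\<close>
definition simple_integral :: "'a set set \<Rightarrow> ('a set \<Rightarrow> real) \<Rightarrow> ('a \<Rightarrow> 'b::real_normed_vector) \<Rightarrow> 'b" where
  "simple_integral V v h = (SOME I. \<exists>k y A. simple_rep V h k y A \<and> I = (\<Sum>i<k. v (A i) *\<^sub>R y i))"

definition simple_norm :: "'a set set \<Rightarrow> ('a set \<Rightarrow> real) \<Rightarrow> ('a \<Rightarrow> 'b::real_normed_vector) \<Rightarrow> real" where
  "simple_norm V v h = simple_integral V v (\<lambda>x. norm (h x))"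

definition null_set :: "'a set set \<Rightarrow> ('a set \<Rightarrow> real) \<Rightarrow> 'a set \<Rightarrow> bool" where
  "null_set V v N \<longleftrightarrow> (\<forall>\<epsilon>>0. \<exists>A :: nat \<Rightarrow> 'a set. range A \<subseteq> V \<and> N \<subseteq> \<Union>(range A) \<and>
       summable (\<lambda>t. v (A t)) \<and> (\<Sum>t. v (A t)) < \<epsilon>)"

definition almost_everywhere :: "'a set set \<Rightarrow> ('a set \<Rightarrow> real) \<Rightarrow> ('a \<Rightarrow> bool) \<Rightarrow> bool" where
  "almost_everywhere V v P \<longleftrightarrow> (\<exists>N. null_set V v N \<and> (\<forall>x. x \<notin> N \<longrightarrow> P x))"

text \<open>Basic sequence (0-indexed): h n in S(V,Y), norm (h n) \<le> M / 4^n, s n = sum_{i\<le>n} h i.\<close>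
definition basic_increments :: "'a set set \<Rightarrow> ('a set \<Rightarrow> real) \<Rightarrow> (nat \<Rightarrow> 'a \<Rightarrow> 'b::real_normed_vector) \<Rightarrow> bool" where
  "basic_increments V v h \<longleftrightarrow> (\<forall>n. h n \<in> simple_funs V) \<and>
     (\<exists>M. \<forall>n. simple_norm V v (h n) \<le> M / 4 ^ n)"

definition L_space :: "'a set set \<Rightarrow> ('a set \<Rightarrow> real) \<Rightarrow> ('a \<Rightarrow> 'b::real_normed_vector) set" where
  "L_space V v = {f. \<exists>h. basic_increments V v h \<and>
     almost_everywhere V v (\<lambda>x. (\<lambda>n. \<Sum>i\<le>n. h i x) \<longlonglongrightarrow> f x)}"

definition G_set :: "'a set set \<Rightarrow> ('a set \<Rightarrow> real) \<Rightarrow> ('a \<Rightarrow> real) set" where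
  "G_set V v = {g. g \<in> L_space V v \<and> (\<forall>x. 0 \<le> g x) \<and>
     (\<exists>s :: nat \<Rightarrow> 'a \<Rightarrow> real. (\<forall>n. s n \<in> simple_funs V) \<and> (\<forall>n x. s n x \<le> s (Suc n) x) \<and>
        almost_everywhere V v (\<lambda>x. (\<lambda>n. s n x) \<longlonglongrightarrow> g x))}"

end

theory Submission
  imports Defs
begin


definition dec :: "'a set set \<Rightarrow> 'a set set \<Rightarrow> bool" where
  "dec V F \<longleftrightarrow> finite F \<and> F \<subseteq> V \<and> disjoint F"

definition ringV :: "'a set set \<Rightarrow> 'a set set" where
  "ringV V = {\<Union>F | F. dec V F}"

lemma prering_empty: "prering V \<Longrightarrow> {} \<in> V"
  by (simp add: prering_def)

lemma prering_ops:
  assumes "prering V" "a \<in> V" "b \<in> V"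
  shows "(\<exists>F. dec V F \<and> a \<inter> b = \<Union>F) \<and> (\<exists>F. dec V F \<and> a - b = \<Union>F)"
proof -
  have "\<forall>A\<in>V. \<forall>B\<in>V.
        (\<exists>F. finite F \<and> F \<subseteq> V \<and> disjoint F \<and> A \<inter> B = \<Union>F) \<and>
        (\<exists>F. finite F \<and> F \<subseteq> V \<and> disjoint F \<and> A - B = \<Union>F)"
    using assms(1) unfolding prering_def by (rule conjunct2)
  from this[rule_format, OF assms(2) assms(3)] show ?thesis unfolding dec_def by simp
qed

lemma prering_Int: "prering V \<Longrightarrow> a \<in> V \<Longrightarrow> b \<in> V \<Longrightarrow> \<exists>F. dec V F \<and> a \<inter> b = \<Union>F"
  by (rule conjunct1[OF prering_ops]) 

lemma prering_Diff: "prering V \<Longrightarrow> a \<in> V \<Longrightarrow> b \<in> V \<Longrightarrow> \<exists>F. dec V F \<and> a - b = \<Union>F"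
  by (rule conjunct2[OF prering_ops]) 

lemma ringV_iff: "a \<in> ringV V \<longleftrightarrow> (\<exists>F. dec V F \<and> a = \<Union>F)"
  unfolding ringV_def by auto

lemma ringV_I: "dec V F \<Longrightarrow> a = \<Union>F \<Longrightarrow> a \<in> ringV V"
  unfolding ringV_iff by (rule exI[of _ F]) simp

lemma ringV_E: "a \<in> ringV V \<Longrightarrow> (\<And>F. dec V F \<Longrightarrow> a = \<Union>F \<Longrightarrow> P) \<Longrightarrow> P"
  unfolding ringV_iff by (elim exE conjE)

lemma ringV_V: "a \<in> V \<Longrightarrow> a \<in> ringV V"
  unfolding ringV_def dec_def by (rule CollectI, rule exI[of _ "{a}"]) (auto simp: disjoint_def)

lemma ringV_empty: "{} \<in> ringV V"
  unfolding ringV_def dec_def by (rule CollectI, rule exI[of _ "{}"]) (auto simp: disjoint_def)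

lemma dec_UN:
  assumes "finite I" "\<And>i. i \<in> I \<Longrightarrow> dec V (F i)" "disjoint_family_on (\<lambda>i. \<Union>(F i)) I"
  shows "dec V (\<Union>i\<in>I. F i)"
  unfolding dec_def
proof (intro conjI)
  show "finite (\<Union>i\<in>I. F i)" using assms by (auto simp: dec_def)
  show "(\<Union>i\<in>I. F i) \<subseteq> V" using assms by (auto simp: dec_def)
  show "disjoint (\<Union>i\<in>I. F i)"
  proof (rule disjointI)
    fix a b assume a: "a \<in> (\<Union>i\<in>I. F i)" and b: "b \<in> (\<Union>i\<in>I. F i)" and ab: "a \<noteq> b"
    from a obtain i where i: "i \<in> I" "a \<in> F i" by auto
    from b obtain j where j: "j \<in> I" "b \<in> F j" by auto
    show "a \<inter> b = {}"
    proof (cases "i = j")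
      case True
      then have "disjoint (F i)" "b \<in> F i" using assms(2)[OF i(1)] j by (auto simp: dec_def)
      then show ?thesis using disjointD i ab by blast
    next
      case False
      then have "\<Union>(F i) \<inter> \<Union>(F j) = {}" using assms(3) i(1) j(1) unfolding disjoint_family_on_def by blast
      moreover have "a \<subseteq> \<Union>(F i)" "b \<subseteq> \<Union>(F j)" using i j by auto
      ultimately show ?thesis by blast
    qed
  qed
qed

lemma ringV_UN:
  assumes "finite I" "\<And>i. i \<in> I \<Longrightarrow> S i \<in> ringV V" "disjoint_family_on S I"
  shows "(\<Union>i\<in>I. S i) \<in> ringV V"
proof -
  have "\<forall>i\<in>I. \<exists>F. dec V F \<and> S i = \<Union>F" using assms(2) by (simp add: ringV_iff)
  from bchoice[OF this] obtain F where F0: "\<forall>i\<in>I. dec V (F i) \<and> S i = \<Union>(F i)" ..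
  note F = F0[rule_format]
  have "dec V (\<Union>i\<in>I. F i)"
  proof (rule dec_UN[OF assms(1)])
    show "\<And>i. i\<in>I \<Longrightarrow> dec V (F i)" using F by blast
    show "disjoint_family_on (\<lambda>i. \<Union>(F i)) I"
      unfolding disjoint_family_on_def
    proof (intro ballI impI)
      fix i j assume "i \<in> I" "j \<in> I" "i \<noteq> j"
      then have "S i \<inter> S j = {}" using assms(3) unfolding disjoint_family_on_def by blast
      then show "\<Union>(F i) \<inter> \<Union>(F j) = {}" using F \<open>i \<in> I\<close> \<open>j \<in> I\<close> by simp
    qed
  qed
  moreover have "(\<Union>i\<in>I. S i) = \<Union>(\<Union>i\<in>I. F i)" using F by auto
  ultimately show ?thesis by (rule ringV_I)
qed

lemma ringV_Diff_V:
  assumes "prering V" "x \<in> ringV V" "g \<in> V"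
  shows "x - g \<in> ringV V"
proof -
  from assms(2) obtain F where F: "dec V F" "x = \<Union>F" by (auto simp: ringV_iff)
  have "\<forall>c\<in>F. \<exists>G. dec V G \<and> c - g = \<Union>G"
  proof (intro ballI)
    fix c assume "c \<in> F"
    hence "c \<in> V" using F by (auto simp: dec_def)
    thus "\<exists>G. dec V G \<and> c - g = \<Union>G" using prering_Diff[OF assms(1) _ assms(3)] by simp
  qed
  from bchoice[OF this] obtain G where G0: "\<forall>c\<in>F. dec V (G c) \<and> c - g = \<Union>(G c)" ..
  note G = G0[rule_format]
  have "(\<Union>c\<in>F. c - g) \<in> ringV V"
  proof (rule ringV_UN)
    show "finite F" using F by (simp add: dec_def)
    show "c - g \<in> ringV V" if "c \<in> F" for c using G[OF that] by (intro ringV_I[of V "G c"]) simp_all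
    show "disjoint_family_on (\<lambda>c. c - g) F"
      using F(1) by (auto simp: dec_def disjoint_family_on_def disjoint_def)
  qed
  moreover have "(\<Union>c\<in>F. c - g) = x - g" using F by auto
  ultimately show ?thesis by simp
qed

lemma ringV_Diff_fin:
  assumes "prering V" "x \<in> ringV V" "finite G" "G \<subseteq> V"
  shows "x - \<Union>G \<in> ringV V"
  using assms(3,4)
proof (induction G rule: finite_induct)
  case empty then show ?case using assms(2) by simp
next
  case (insert g G)
  have "x - \<Union>(insert g G) = (x - \<Union>G) - g" by auto
  then show ?case using insert ringV_Diff_V[OF assms(1)] by auto
qed

lemma ringV_Diff:
  assumes "prering V" "a \<in> ringV V" "b \<in> ringV V"
  shows "a - b \<in> ringV V"
proof -
  from assms(3) obtain F where F: "dec V F" "b = \<Union>F" by (auto simp: ringV_iff)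
  then show ?thesis using ringV_Diff_fin[OF assms(1,2), of F] by (simp add: dec_def)
qed

lemma ringV_Un:
  assumes "prering V" "a \<in> ringV V" "b \<in> ringV V"
  shows "a \<union> b \<in> ringV V"
proof -
  from ringV_Diff[OF assms] obtain F where F: "dec V F" "a - b = \<Union>F" by (auto simp: ringV_iff)
  from assms(3) obtain G where G: "dec V G" "b = \<Union>G" by (auto simp: ringV_iff)
  have "\<Union>F \<inter> \<Union>G = {}" using F(2) G(2) by auto
  hence "dec V (F \<union> G)"
    using F(1) G(1) disjoint_union[of F G] unfolding dec_def by simp
  moreover have "a \<union> b = \<Union>(F \<union> G)" using F G by auto
  ultimately show ?thesis by (rule ringV_I)
qed

lemma ringV_Int:
  assumes "prering V" "a \<in> ringV V" "b \<in> ringV V"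
  shows "a \<inter> b \<in> ringV V"
proof -
  have "a \<inter> b = a - (a - b)" by auto
  then show ?thesis using ringV_Diff[OF assms(1)] assms by metis
qed

lemma ring_ringV: "prering V \<Longrightarrow> ring_of_sets UNIV (ringV V)"
  by (simp add: ring_of_sets_iff ringV_empty ringV_Un ringV_Diff)




lemma sum_ind_one:
  fixes w :: "'i \<Rightarrow> 'b::real_normed_vector"
  assumes "finite I" "disjoint_family_on S I" "p0 \<in> I" "x \<in> S p0"
  shows "(\<Sum>p\<in>I. indicator (S p) x *\<^sub>R w p) = w p0"
proof -
  have "(\<Sum>p\<in>I. indicator (S p) x *\<^sub>R w p) = indicator (S p0) x *\<^sub>R w p0 + (\<Sum>p\<in>I - {p0}. indicator (S p) x *\<^sub>R w p)"
    using assms(1,3) by (rule sum.remove)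
  also have "(\<Sum>p\<in>I - {p0}. indicator (S p) x *\<^sub>R w p) = 0"
  proof (rule sum.neutral, intro ballI)
    fix p assume "p \<in> I - {p0}"
    then have "S p \<inter> S p0 = {}" using assms(2,3) unfolding disjoint_family_on_def by auto
    then have "x \<notin> S p" using assms(4) by auto
    then show "indicator (S p) x *\<^sub>R w p = 0" by simp
  qed
  finally show ?thesis using assms(4) by simp
qed

lemma sum_ind_none:
  fixes w :: "'i \<Rightarrow> 'b::real_normed_vector"
  assumes "\<And>p. p \<in> I \<Longrightarrow> x \<notin> S p"
  shows "(\<Sum>p\<in>I. indicator (S p) x *\<^sub>R w p) = 0"
  using assms by (intro sum.neutral) auto

lemma simple_rep_disj_fam: "simple_rep V h k y A \<Longrightarrow> disjoint_family_on A {..<k}"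
  unfolding simple_rep_def disjoint_family_on_def by auto

lemma simple_rep_at:
  assumes "simple_rep V h k y A" "j < k" "x \<in> A j"
  shows "h x = y j"
proof -
  have "h x = (\<Sum>i\<in>{..<k}. indicator (A i) x *\<^sub>R y i)" using assms(1) by (simp add: simple_rep_def)
  also have "\<dots> = y j" using sum_ind_one[OF _ simple_rep_disj_fam[OF assms(1)]] assms(2,3) by simp
  finally show ?thesis .
qed

lemma simple_rep_out:
  assumes "simple_rep V h k y A" "\<And>j. j < k \<Longrightarrow> x \<notin> A j"
  shows "h x = 0"
proof -
  have "h x = (\<Sum>i\<in>{..<k}. indicator (A i) x *\<^sub>R y i)" using assms(1) by (simp add: simple_rep_def)
  also have "\<dots> = 0" using assms(2) by (intro sum_ind_none) auto
  finally show ?thesis .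
qed

lemma SF_ring:
  fixes y :: "'i \<Rightarrow> 'b::real_normed_vector"
  assumes fin: "finite I" and S: "\<And>i. i\<in>I \<Longrightarrow> S i \<in> ringV V" and dj: "disjoint_family_on S I"
  shows "(\<lambda>x. \<Sum>i\<in>I. indicator (S i) x *\<^sub>R y i) \<in> simple_funs V"
proof -
  have "\<forall>i\<in>I. \<exists>F. dec V F \<and> S i = \<Union>F" using S by (simp add: ringV_iff)
  from bchoice[OF this] obtain F where F0: "\<forall>i\<in>I. dec V (F i) \<and> S i = \<Union>(F i)" ..
  note F = F0[rule_format]
  define T where "T = Sigma I F"
  have finT: "finite T" unfolding T_def using fin F by (auto simp: dec_def)
  have eq1: "(\<Sum>i\<in>I. indicator (S i) x *\<^sub>R y i) = (\<Sum>p\<in>T. indicator (snd p) x *\<^sub>R y (fst p))" for x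
  proof -
    have "(\<Sum>i\<in>I. indicator (S i) x *\<^sub>R y i) = (\<Sum>i\<in>I. \<Sum>c\<in>F i. indicator c x *\<^sub>R y i)"
    proof (rule sum.cong[OF refl])
      fix i assume i: "i \<in> I"
      have dfi: "disjoint_family_on (\<lambda>c. c) (F i)"
        using F[OF i] unfolding dec_def disjoint_family_on_def disjoint_def by auto
      have "(indicator (S i) x :: real) = (\<Sum>c\<in>F i. indicator c x)"
        using indicator_UN_disjoint[OF _ dfi, of x] F[OF i] by (simp add: dec_def)
      then show "indicator (S i) x *\<^sub>R y i = (\<Sum>c\<in>F i. indicator c x *\<^sub>R y i)"
        by (simp add: scaleR_sum_left)
    qed
    also have "\<dots> = (\<Sum>(i,c)\<in>Sigma I F. indicator c x *\<^sub>R y i)"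
      using fin F by (intro sum.Sigma) (auto simp: dec_def)
    finally show ?thesis unfolding T_def by (simp add: case_prod_beta)
  qed
  obtain e where e: "bij_betw e {0..<card T} T" using ex_bij_betw_nat_finite[OF finT] by blast
  define k where "k = card T"
  define A where "A j = snd (e j)" for j
  define yy where "yy j = y (fst (e j))" for j
  have eT: "j < k \<Longrightarrow> e j \<in> T" for j using e unfolding k_def bij_betw_def by auto
  have rep: "simple_rep V (\<lambda>x. \<Sum>i\<in>I. indicator (S i) x *\<^sub>R y i) k yy A"
    unfolding simple_rep_def
  proof (intro conjI allI impI)
    fix j assume "j < k"
    then have "e j \<in> T" by (rule eT)
    then obtain a c where "a \<in> I" "c \<in> F a" "e j = (a, c)" unfolding T_def by auto
    moreover then have "F a \<subseteq> V" using F by (simp add: dec_def)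
    ultimately show "A j \<in> V" unfolding A_def by auto
  next
    fix i j assume ij: "i < k" "j < k" "i \<noteq> j"
    then have ne: "e i \<noteq> e j" using e unfolding bij_betw_def inj_on_def k_def by auto
    obtain a c where ac: "e i = (a, c)" by (cases "e i")
    obtain b d where bd: "e j = (b, d)" by (cases "e j")
    have a: "a \<in> I" "c \<in> F a" using eT[OF ij(1)] ac unfolding T_def by auto
    have b: "b \<in> I" "d \<in> F b" using eT[OF ij(2)] bd unfolding T_def by auto
    show "A i \<inter> A j = {}"
    proof (cases "a = b")
      case True
      then have "c \<noteq> d" using ne ac bd by auto
      moreover have "disjoint (F a)" using F[OF a(1)] by (simp add: dec_def)
      ultimately show ?thesis using a b True disjointD unfolding A_def ac bd by fastforce
    next
      case False
      then have "S a \<inter> S b = {}" using dj a(1) b(1) unfolding disjoint_family_on_def by blast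
      moreover have "c \<subseteq> S a" "d \<subseteq> S b" using F a b by auto
      ultimately show ?thesis unfolding A_def ac bd by auto
    qed
  next
    have "(\<lambda>x. \<Sum>i\<in>I. indicator (S i) x *\<^sub>R y i) = (\<lambda>x. \<Sum>p\<in>T. indicator (snd p) x *\<^sub>R y (fst p))"
      using eq1 by (rule ext)
    also have "\<dots> = (\<lambda>x. \<Sum>j<k. indicator (A j) x *\<^sub>R yy j)"
    proof (rule ext)
      fix x
      show "(\<Sum>p\<in>T. indicator (snd p) x *\<^sub>R y (fst p)) = (\<Sum>j<k. indicator (A j) x *\<^sub>R yy j)"
        using sum.reindex_bij_betw[OF e, of "\<lambda>p. indicator (snd p) x *\<^sub>R y (fst p)"]
        unfolding A_def yy_def k_def by (simp add: atLeast0LessThan)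
    qed
    finally show "(\<lambda>x. \<Sum>i\<in>I. indicator (S i) x *\<^sub>R y i) = (\<lambda>x. \<Sum>j<k. indicator (A j) x *\<^sub>R yy j)" .
  qed
  then show ?thesis unfolding simple_funs_def by blast
qed


declare sum_indicator_scaleR[simp del] sum_mult_indicator[simp del] sum_indicator_mult[simp del]

lemma SF_add_term:
  fixes h :: "'a \<Rightarrow> 'b::real_normed_vector"
  assumes pr: "prering V" and h: "h \<in> simple_funs V" and B: "B \<in> V"
  shows "(\<lambda>x. h x + indicator B x *\<^sub>R z) \<in> simple_funs V"
proof -
  from h obtain k y A where rep: "simple_rep V h k y A" unfolding simple_funs_def by blast
  have AV: "\<And>i. i < k \<Longrightarrow> A i \<in> V" and Adj: "\<And>i j. i < k \<Longrightarrow> j < k \<Longrightarrow> i \<noteq> j \<Longrightarrow> A i \<inter> A j = {}"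
    using rep unfolding simple_rep_def by auto
  define I :: "(nat \<times> nat) set" where "I = ({..<k} \<times> {0,1}) \<union> {(k,0)}"
  define S where "S (p :: nat \<times> nat) = (if fst p = k then B - (\<Union>i<k. A i) else if snd p = 0 then A (fst p) \<inter> B else A (fst p) - B)" for p
  define w where "w (p :: nat \<times> nat) = (if fst p = k then z else if snd p = 0 then y (fst p) + z else y (fst p))" for p
  have finI: "finite I" unfolding I_def by auto
  have Sring: "S p \<in> ringV V" if "p \<in> I" for p
  proof -
    obtain i b where p: "p = (i, b)" by (cases p)
    show ?thesis
    proof (cases "i = k")
      case True
      have "B - \<Union>(A ` {..<k}) \<in> ringV V"
        using ringV_Diff_fin[OF pr ringV_V[OF B], of "A ` {..<k}"] AV by auto
      then show ?thesis using True p unfolding S_def by simp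
    next
      case False
      then have "i < k" using that p unfolding I_def by auto
      then have "A i \<in> ringV V" "B \<in> ringV V" using AV B ringV_V by auto
      then show ?thesis using False p ringV_Int[OF pr] ringV_Diff[OF pr] unfolding S_def by auto
    qed
  qed
  have dj: "disjoint_family_on S I"
    unfolding disjoint_family_on_def
  proof (intro ballI impI)
    fix p q assume p: "p \<in> I" and q: "q \<in> I" and pq: "p \<noteq> q"
    obtain i a where pi: "p = (i, a)" by (cases p)
    obtain j b where qj: "q = (j, b)" by (cases q)
    show "S p \<inter> S q = {}"
    proof (cases "i = k")
      case True
      then have "j \<noteq> k \<or> a \<noteq> b" using pq pi qj by auto
      then have "j < k" using True p q pi qj pq unfolding I_def by auto
      then show ?thesis using True pi qj unfolding S_def by auto
    next
      case False
      then have ik: "i < k" using p pi unfolding I_def by auto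
      show ?thesis
      proof (cases "j = k")
        case True
        then show ?thesis using False ik pi qj unfolding S_def by auto
      next
        case False
        then have jk: "j < k" using q qj unfolding I_def by auto
        show ?thesis
        proof (cases "i = j")
          case True
          then have "a \<noteq> b" using pq pi qj by auto
          moreover have "a \<in> {0,1}" "b \<in> {0,1}" using p q pi qj \<open>i \<noteq> k\<close> \<open>j \<noteq> k\<close> unfolding I_def by auto
          ultimately show ?thesis using True pi qj ik \<open>i \<noteq> k\<close> unfolding S_def by auto
        next
          case False
          then have "A i \<inter> A j = {}" using Adj ik jk by auto
          then show ?thesis using False pi qj ik jk \<open>i \<noteq> k\<close> \<open>j \<noteq> k\<close> unfolding S_def by auto
        qed
      qed
    qed
  qed
  have eq: "h x + indicator B x *\<^sub>R z = (\<Sum>p\<in>I. indicator (S p) x *\<^sub>R w p)" for x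
  proof (cases "\<exists>j<k. x \<in> A j")
    case True
    then obtain j where j: "j < k" "x \<in> A j" by blast
    have hx: "h x = y j" using simple_rep_at[OF rep j] .
    show ?thesis
    proof (cases "x \<in> B")
      case True
      have "(\<Sum>p\<in>I. indicator (S p) x *\<^sub>R w p) = w (j, 0)"
        using j True by (intro sum_ind_one[OF finI dj]) (auto simp: I_def S_def)
      then show ?thesis using hx True j by (simp add: w_def)
    next
      case False
      have "(\<Sum>p\<in>I. indicator (S p) x *\<^sub>R w p) = w (j, 1)"
        using j False by (intro sum_ind_one[OF finI dj]) (auto simp: I_def S_def)
      then show ?thesis using hx False j by (simp add: w_def)
    qed
  next
    case False
    have hx: "h x = 0" using simple_rep_out[OF rep] False by blast
    show ?thesis
    proof (cases "x \<in> B")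
      case True
      have "(\<Sum>p\<in>I. indicator (S p) x *\<^sub>R w p) = w (k, 0)"
        using False True by (intro sum_ind_one[OF finI dj]) (auto simp: I_def S_def)
      then show ?thesis using hx True by (simp add: w_def)
    next
      case nB: False
      have "(\<Sum>p\<in>I. indicator (S p) x *\<^sub>R w p) = 0"
        using False nB by (intro sum_ind_none) (auto simp: I_def S_def split: if_splits)
      then show ?thesis using hx nB by simp
    qed
  qed
  have "(\<lambda>x. \<Sum>p\<in>I. indicator (S p) x *\<^sub>R w p) \<in> simple_funs V"
    by (rule SF_ring[OF finI Sring dj])
  moreover have "(\<lambda>x. h x + indicator B x *\<^sub>R z) = (\<lambda>x. \<Sum>p\<in>I. indicator (S p) x *\<^sub>R w p)"
    using eq by (rule ext)
  ultimately show ?thesis by simp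
qed

lemma SF_add_sum:
  fixes h :: "'a \<Rightarrow> 'b::real_normed_vector" and k :: nat
  assumes pr: "prering V" and h: "h \<in> simple_funs V" and A: "\<And>i. i < k \<Longrightarrow> A i \<in> V"
  shows "(\<lambda>x. h x + (\<Sum>i<k. indicator (A i) x *\<^sub>R y i)) \<in> simple_funs V"
  using A
proof (induction k)
  case 0
  then show ?case using h by simp
next
  case (Suc k)
  have "(\<lambda>x. (h x + (\<Sum>i<k. indicator (A i) x *\<^sub>R y i)) + indicator (A k) x *\<^sub>R y k) \<in> simple_funs V"
    using Suc by (intro SF_add_term[OF pr, where h = "\<lambda>x. h x + (\<Sum>i<k. indicator (A i) x *\<^sub>R y i)"]) auto
  then show ?case by (simp add: add.assoc)
qed

lemma SF_zero: "(\<lambda>x. 0) \<in> simple_funs V"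
  unfolding simple_funs_def simple_rep_def by (rule CollectI, rule exI[of _ 0]) auto

lemma SF_add:
  fixes h g :: "'a \<Rightarrow> 'b::real_normed_vector"
  assumes pr: "prering V" and h: "h \<in> simple_funs V" and g: "g \<in> simple_funs V"
  shows "(\<lambda>x. h x + g x) \<in> simple_funs V"
proof -
  from g obtain k y A where rep: "simple_rep V g k y A" unfolding simple_funs_def by blast
  then have geq: "g = (\<lambda>x. \<Sum>i<k. indicator (A i) x *\<^sub>R y i)" and AV: "\<And>i. i < k \<Longrightarrow> A i \<in> V"
    unfolding simple_rep_def by auto
  show ?thesis unfolding geq by (rule SF_add_sum[OF pr h AV])
qed

lemma SF_scale:
  fixes h :: "'a \<Rightarrow> 'b::real_normed_vector"
  assumes h: "h \<in> simple_funs V"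
  shows "(\<lambda>x. c *\<^sub>R h x) \<in> simple_funs V"
proof -
  from h obtain k y A where rep: "simple_rep V h k y A" unfolding simple_funs_def by blast
  have "simple_rep V (\<lambda>x. c *\<^sub>R h x) k (\<lambda>i. c *\<^sub>R y i) A"
    using rep unfolding simple_rep_def by (auto simp: scaleR_sum_right mult.commute)
  then show ?thesis unfolding simple_funs_def by blast
qed

lemma SF_diff:
  fixes h g :: "'a \<Rightarrow> 'b::real_normed_vector"
  assumes pr: "prering V" and h: "h \<in> simple_funs V" and g: "g \<in> simple_funs V"
  shows "(\<lambda>x. h x - g x) \<in> simple_funs V"
  using SF_add[OF pr h SF_scale[OF g, of "-1"]] by simp

lemma simple_rep_norm:
  fixes h :: "'a \<Rightarrow> 'b::real_normed_vector"
  assumes rep: "simple_rep V h k y A"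
  shows "simple_rep V (\<lambda>x. norm (h x)) k (\<lambda>i. norm (y i)) A"
proof -
  have "norm (h x) = (\<Sum>i<k. indicator (A i) x *\<^sub>R norm (y i))" for x
  proof (cases "\<exists>j<k. x \<in> A j")
    case True
    then obtain j where j: "j < k" "x \<in> A j" by blast
    have "(\<Sum>i<k. indicator (A i) x *\<^sub>R norm (y i)) = norm (y j)"
      by (rule sum_ind_one[OF _ simple_rep_disj_fam[OF rep]]) (use j in auto)
    then show ?thesis using simple_rep_at[OF rep j] by simp
  next
    case False
    then show ?thesis using simple_rep_out[OF rep] by (auto intro!: sum.neutral)
  qed
  then show ?thesis using rep unfolding simple_rep_def by auto
qed

lemma SF_norm:
  fixes h :: "'a \<Rightarrow> 'b::real_normed_vector"
  assumes h: "h \<in> simple_funs V"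
  shows "(\<lambda>x. norm (h x)) \<in> simple_funs V"
  using h simple_rep_norm unfolding simple_funs_def by blast

lemma SF_sum:
  fixes h :: "nat \<Rightarrow> 'a \<Rightarrow> 'b::real_normed_vector"
  assumes pr: "prering V" and h: "\<And>i. h i \<in> simple_funs V"
  shows "(\<lambda>x. \<Sum>i\<le>n. h i x) \<in> simple_funs V"
proof (induction n)
  case 0
  then show ?case using h by simp
next
  case (Suc n)
  then show ?case using SF_add[OF pr Suc h[of "Suc n"]] by simp
qed




lemma ms_prering: "measure_space_pr V v \<Longrightarrow> prering V"
  by (simp add: measure_space_pr_def)

lemma ms_nonneg: "measure_space_pr V v \<Longrightarrow> a \<in> V \<Longrightarrow> 0 \<le> v a"
  by (simp add: measure_space_pr_def)

lemma ms_ca: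
  assumes "measure_space_pr V v" "range A \<subseteq> V" "disjoint_family A" "(\<Union>n. A n) \<in> V"
  shows "(\<lambda>n. v (A n)) sums v (\<Union>n. A n)"
  using assms unfolding measure_space_pr_def countably_additive_on_def by blast

lemma v_empty:
  assumes ms: "measure_space_pr V v"
  shows "v {} = 0"
proof -
  have "{} \<in> V" using prering_empty[OF ms_prering[OF ms]] .
  then have "(\<lambda>n. v ((\<lambda>_. {}) n)) sums v (\<Union>n. (\<lambda>_. {}) n)"
    using ms_ca[OF ms, of "\<lambda>_. {}"] by (simp add: disjoint_family_on_def)
  then have "summable (\<lambda>n. v {})" by (simp add: sums_iff)
  then show ?thesis by (simp add: summable_const_iff)
qed

lemma FA:
  assumes ms: "measure_space_pr V v" and fin: "finite I" and G: "\<And>i. i \<in> I \<Longrightarrow> G i \<in> V"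
    and dj: "disjoint_family_on G I" and d: "(\<Union>i\<in>I. G i) \<in> V"
  shows "v (\<Union>i\<in>I. G i) = (\<Sum>i\<in>I. v (G i))"
proof -
  obtain e where e: "bij_betw e {0..<card I} I" using ex_bij_betw_nat_finite[OF fin] by blast
  define n where "n = card I"
  define A where "A m = (if m < n then G (e m) else {})" for m
  have eI: "m < n \<Longrightarrow> e m \<in> I" for m using e unfolding bij_betw_def n_def by auto
  have AV: "range A \<subseteq> V" using G eI prering_empty[OF ms_prering[OF ms]] unfolding A_def by auto
  have Adj: "disjoint_family A"
    unfolding disjoint_family_on_def
  proof (intro ballI impI)
    fix m m' :: nat assume "m \<noteq> m'"
    show "A m \<inter> A m' = {}"
    proof (cases "m < n \<and> m' < n")
      case True
      then have "e m \<noteq> e m'" using e \<open>m \<noteq> m'\<close> unfolding bij_betw_def inj_on_def n_def by auto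
      then show ?thesis using dj eI True unfolding A_def disjoint_family_on_def by auto
    next
      case False
      then show ?thesis unfolding A_def by auto
    qed
  qed
  have Aun: "(\<Union>m. A m) = (\<Union>i\<in>I. G i)"
  proof
    show "(\<Union>m. A m) \<subseteq> (\<Union>i\<in>I. G i)" using eI unfolding A_def by auto
  next
    show "(\<Union>i\<in>I. G i) \<subseteq> (\<Union>m. A m)"
    proof
      fix x assume "x \<in> (\<Union>i\<in>I. G i)"
      then obtain i where i: "i \<in> I" "x \<in> G i" by auto
      then obtain m where "m < n" "e m = i" using e unfolding bij_betw_def n_def by force
      then show "x \<in> (\<Union>m. A m)" using i unfolding A_def by auto
    qed
  qed
  have s1: "(\<lambda>m. v (A m)) sums v (\<Union>i\<in>I. G i)"
    using ms_ca[OF ms AV Adj] Aun d by simp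
  have s2: "(\<lambda>m. v (A m)) sums (\<Sum>m\<in>{..<n}. v (A m))"
    by (rule sums_finite) (auto simp: A_def v_empty[OF ms])
  have "(\<Sum>m\<in>{..<n}. v (A m)) = (\<Sum>m\<in>{..<n}. v (G (e m)))" unfolding A_def by simp
  also have "\<dots> = (\<Sum>i\<in>I. v (G i))"
    using sum.reindex_bij_betw[OF e, of "\<lambda>i. v (G i)"] unfolding n_def by (simp add: atLeast0LessThan)
  finally show ?thesis using sums_unique2[OF s1 s2] by simp
qed

lemma split_sum:
  assumes ms: "measure_space_pr V v" and C: "dec V C" and a: "a \<in> V" "a \<subseteq> \<Union>C"
    and H: "\<And>c. c \<in> C \<Longrightarrow> dec V (H c) \<and> c \<inter> a = \<Union>(H c)"
  shows "v a = (\<Sum>c\<in>C. \<Sum>e\<in>H c. v e)"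
proof -
  define I where "I = Sigma C H"
  have finC: "finite C" using C by (simp add: dec_def)
  have finI: "finite I" unfolding I_def using finC H by (auto simp: dec_def)
  have un: "(\<Union>p\<in>I. snd p) = a"
  proof -
    have "(\<Union>p\<in>I. snd p) = (\<Union>c\<in>C. \<Union>(H c))" unfolding I_def by force
    also have "\<dots> = (\<Union>c\<in>C. c \<inter> a)" using H by auto
    also have "\<dots> = a" using a(2) by auto
    finally show ?thesis .
  qed
  have GV: "snd p \<in> V" if "p \<in> I" for p
  proof -
    obtain c e where pe: "p = (c, e)" by (cases p)
    with that have ce: "c \<in> C" "e \<in> H c" unfolding I_def by auto
    then have "H c \<subseteq> V" using H by (simp add: dec_def)
    then show ?thesis using ce pe by auto
  qed
  have dj: "disjoint_family_on snd I"
    unfolding disjoint_family_on_def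
  proof (intro ballI impI)
    fix p q assume p: "p \<in> I" and q: "q \<in> I" and pq: "p \<noteq> q"
    obtain c e where pc: "p = (c, e)" by (cases p)
    obtain c' e' where qc: "q = (c', e')" by (cases q)
    have pm: "c \<in> C" "e \<in> H c" using p pc unfolding I_def by auto
    have qm: "c' \<in> C" "e' \<in> H c'" using q qc unfolding I_def by auto
    show "snd p \<inter> snd q = {}"
    proof (cases "c = c'")
      case True
      then have "e \<noteq> e'" using pq pc qc by auto
      moreover have "disjoint (H c)" using H[OF pm(1)] by (simp add: dec_def)
      ultimately show ?thesis using pm qm True disjointD pc qc by fastforce
    next
      case False
      then have "c \<inter> c' = {}" using C pm qm unfolding dec_def using disjointD by blast
      moreover have "e \<subseteq> c" "e' \<subseteq> c'" using H pm qm by auto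
      ultimately show ?thesis using pc qc by auto
    qed
  qed
  have "v a = (\<Sum>p\<in>I. v (snd p))"
    using FA[OF ms finI GV dj] un a(1) by simp
  also have "\<dots> = (\<Sum>c\<in>C. \<Sum>e\<in>H c. v e)"
    unfolding I_def using finC H by (subst sum.Sigma) (auto simp: dec_def case_prod_beta)
  finally show ?thesis .
qed

lemma mu_wd:
  assumes ms: "measure_space_pr V v" and C: "dec V C" and D: "dec V D" and eq: "\<Union>C = \<Union>D"
  shows "(\<Sum>c\<in>C. v c) = (\<Sum>d\<in>D. v d)"
proof -
  have pr: "prering V" using ms by (rule ms_prering)
  have "\<forall>p\<in>C\<times>D. \<exists>E. dec V E \<and> fst p \<inter> snd p = \<Union>E"
  proof
    fix p assume "p \<in> C \<times> D"
    then have "fst p \<in> V" "snd p \<in> V" using C D by (auto simp: dec_def)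
    then show "\<exists>E. dec V E \<and> fst p \<inter> snd p = \<Union>E" by (rule prering_Int[OF pr])
  qed
  from bchoice[OF this] obtain E where E0: "\<forall>p\<in>C\<times>D. dec V (E p) \<and> fst p \<inter> snd p = \<Union>(E p)" ..
  have E: "dec V (E (c, d))" "c \<inter> d = \<Union>(E (c, d))" if "c \<in> C" "d \<in> D" for c d
    using E0 that by auto
  have finC: "finite C" and finD: "finite D" using C D by (auto simp: dec_def)
  have 1: "v d = (\<Sum>c\<in>C. \<Sum>e\<in>E (c, d). v e)" if d: "d \<in> D" for d
  proof (rule split_sum[OF ms C])
    show "d \<in> V" using d D by (auto simp: dec_def)
    show "d \<subseteq> \<Union>C" using d eq by auto
    fix c assume c: "c \<in> C"
    show "dec V (E (c, d)) \<and> c \<inter> d = \<Union>(E (c, d))" using E[OF c d] by simp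
  qed
  have 2: "v c = (\<Sum>d\<in>D. \<Sum>e\<in>E (c, d). v e)" if c: "c \<in> C" for c
  proof (rule split_sum[OF ms D])
    show "c \<in> V" using c C by (auto simp: dec_def)
    show "c \<subseteq> \<Union>D" using c eq by auto
    fix d assume d: "d \<in> D"
    have "d \<inter> c = \<Union>(E (c, d))" using E(2)[OF c d] by (simp add: Int_commute)
    then show "dec V (E (c, d)) \<and> d \<inter> c = \<Union>(E (c, d))" using E(1)[OF c d] by simp
  qed
  have "(\<Sum>c\<in>C. v c) = (\<Sum>c\<in>C. \<Sum>d\<in>D. \<Sum>e\<in>E (c, d). v e)" using 2 by simp
  also have "\<dots> = (\<Sum>d\<in>D. \<Sum>c\<in>C. \<Sum>e\<in>E (c, d). v e)" by (rule sum.swap)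
  also have "\<dots> = (\<Sum>d\<in>D. v d)" using 1 by simp
  finally show ?thesis .
qed

definition mur :: "'a set set \<Rightarrow> ('a set \<Rightarrow> real) \<Rightarrow> 'a set \<Rightarrow> real" where
  "mur V v a = (\<Sum>c\<in>(SOME F. dec V F \<and> a = \<Union>F). v c)"

lemma mur_eq:
  assumes ms: "measure_space_pr V v" and F: "dec V F"
  shows "mur V v (\<Union>F) = (\<Sum>c\<in>F. v c)"
proof -
  have ex: "\<exists>G. dec V G \<and> \<Union>F = \<Union>G" using F by blast
  define G where "G = (SOME G. dec V G \<and> \<Union>F = \<Union>G)"
  have G: "dec V G \<and> \<Union>F = \<Union>G" unfolding G_def by (rule someI_ex[OF ex])
  have "mur V v (\<Union>F) = (\<Sum>c\<in>G. v c)" unfolding mur_def G_def ..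
  also have "\<dots> = (\<Sum>c\<in>F. v c)" using mu_wd[OF ms _ F] G by simp
  finally show ?thesis .
qed

lemma mur_V:
  assumes ms: "measure_space_pr V v" and a: "a \<in> V"
  shows "mur V v a = v a"
proof -
  have "dec V {a}" using a by (simp add: dec_def)
  from mur_eq[OF ms this] show ?thesis by simp
qed

lemma mur_nonneg:
  assumes ms: "measure_space_pr V v" and a: "a \<in> ringV V"
  shows "0 \<le> mur V v a"
proof -
  from a obtain F where F: "dec V F" "a = \<Union>F" by (rule ringV_E)
  then show ?thesis using mur_eq[OF ms F(1)] ms_nonneg[OF ms] by (auto simp: dec_def intro!: sum_nonneg)
qed

lemma mur_add:
  assumes ms: "measure_space_pr V v" and x: "x \<in> ringV V" and y: "y \<in> ringV V" and dj: "x \<inter> y = {}"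
  shows "mur V v (x \<union> y) = mur V v x + mur V v y"
proof -
  from x obtain F where F: "dec V F" "x = \<Union>F" by (rule ringV_E)
  from y obtain G where G: "dec V G" "y = \<Union>G" by (rule ringV_E)
  have "\<Union>F \<inter> \<Union>G = {}" using F G dj by simp
  hence FG: "dec V (F \<union> G)"
    using F(1) G(1) disjoint_union[of F G] unfolding dec_def by simp
  have finF: "finite F" and finG: "finite G" using F G by (auto simp: dec_def)
  have "mur V v (x \<union> y) = (\<Sum>c\<in>F \<union> G. v c)" using mur_eq[OF ms FG] F G by simp
  also have "\<dots> = (\<Sum>c\<in>F. v c) + (\<Sum>c\<in>G. v c) - (\<Sum>c\<in>F \<inter> G. v c)"
    using sum.union_inter[OF finF finG, of v] by simp
  also have "(\<Sum>c\<in>F \<inter> G. v c) = 0"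
  proof (rule sum.neutral, intro ballI)
    fix c assume "c \<in> F \<inter> G"
    then have "c = {}" using F G dj by auto
    then show "v c = 0" using v_empty[OF ms] by simp
  qed
  finally show ?thesis using mur_eq[OF ms F(1)] mur_eq[OF ms G(1)] F G by simp
qed

lemma mur_sum:
  assumes ms: "measure_space_pr V v" and fin: "finite I" and S: "\<And>i. i \<in> I \<Longrightarrow> S i \<in> ringV V"
    and dj: "disjoint_family_on S I"
  shows "mur V v (\<Union>i\<in>I. S i) = (\<Sum>i\<in>I. mur V v (S i))"
  using fin S dj
proof (induction I rule: finite_induct)
  case empty
  then show ?case using mur_V[OF ms prering_empty[OF ms_prering[OF ms]]] v_empty[OF ms] by simp
next
  case (insert i I)
  have djI: "disjoint_family_on S I" using insert(5) disjoint_family_on_mono by blast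
  have r: "(\<Union>j\<in>I. S j) \<in> ringV V" using insert.hyps(1) insert.prems(1) djI by (intro ringV_UN) auto
  have d: "S i \<inter> (\<Union>j\<in>I. S j) = {}" using insert(2,5) unfolding disjoint_family_on_def by auto
  have "mur V v (\<Union>j\<in>insert i I. S j) = mur V v (S i \<union> (\<Union>j\<in>I. S j))" by simp
  also have "\<dots> = mur V v (S i) + mur V v (\<Union>j\<in>I. S j)"
    using mur_add[OF ms _ r d] insert(4) by simp
  also have "\<dots> = mur V v (S i) + (\<Sum>j\<in>I. mur V v (S j))" using insert.IH[OF _ djI] insert.prems by simp
  finally show ?case using insert(1,2) by simp
qed


lemma CAV:
  assumes ms: "measure_space_pr V v" and a: "a \<in> V" and D: "\<And>n. D n \<in> ringV V"
    and dj: "disjoint_family D" and un: "(\<Union>n. D n) = a"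
  shows "(\<lambda>n. mur V v (D n)) sums v a"
proof -
  have "\<forall>n. \<exists>F. dec V F \<and> D n = \<Union>F" using D by (simp add: ringV_iff)
  from choice[OF this] obtain F where F0: "\<forall>n. dec V (F n) \<and> D n = \<Union>(F n)" ..
  have F: "dec V (F n)" "D n = \<Union>(F n)" for n using F0 by auto
  have finF: "finite (F n)" for n using F by (simp add: dec_def)
  have "\<forall>n. \<exists>e. bij_betw e {0..<card (F n)} (F n)" using ex_bij_betw_nat_finite[OF finF] by blast
  from choice[OF this] obtain e where e0: "\<forall>n. bij_betw (e n) {0..<card (F n)} (F n)" ..
  have e: "bij_betw (e n) {..<card (F n)} (F n)" for n using e0 by (simp add: atLeast0LessThan)
  define k where "k n = card (F n)" for n
  have eF: "i < k n \<Longrightarrow> e n i \<in> F n" for n i using e[of n] unfolding bij_betw_def k_def by auto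
  define B where "B p = (if snd p < k (fst p) then e (fst p) (snd p) else {})" for p
  define C where "C m = B (prod_decode m)" for m
  have Vempty: "{} \<in> V" by (rule prering_empty[OF ms_prering[OF ms]])
  have BV: "B p \<in> V" for p
    using eF F(1) Vempty unfolding B_def dec_def by auto
  have CV: "range C \<subseteq> V" using BV unfolding C_def by (simp add: image_subset_iff)
  have Bdj: "B p \<inter> B q = {}" if pq: "p \<noteq> q" for p q
  proof (cases "snd p < k (fst p) \<and> snd q < k (fst q)")
    case False
    then show ?thesis unfolding B_def by auto
  next
    case True
    obtain n i where p: "p = (n, i)" by (cases p)
    obtain n' i' where q: "q = (n', i')" by (cases q)
    have ii: "i < k n" "i' < k n'" using True p q by auto
    show ?thesis
    proof (cases "n = n'")
      case True
      then have "i \<noteq> i'" using pq p q by auto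
      then have "e n i \<noteq> e n i'" using e[of n] ii True unfolding bij_betw_def inj_on_def k_def by auto
      moreover have "disjoint (F n)" using F(1) by (simp add: dec_def)
      ultimately show ?thesis using eF ii True p q disjointD unfolding B_def by fastforce
    next
      case False
      then have "D n \<inter> D n' = {}" using dj unfolding disjoint_family_on_def by auto
      moreover have "e n i \<subseteq> D n" "e n' i' \<subseteq> D n'" using eF ii F(2) by auto
      ultimately show ?thesis using ii p q unfolding B_def by auto
    qed
  qed
  have Cdj: "disjoint_family C"
    unfolding disjoint_family_on_def C_def
  proof (intro ballI impI)
    fix m m' :: nat assume "m \<noteq> m'"
    then have "prod_decode m \<noteq> prod_decode m'" by (metis prod_decode_inverse)
    then show "B (prod_decode m) \<inter> B (prod_decode m') = {}" by (rule Bdj)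
  qed
  have Cun: "(\<Union>m. C m) = a"
  proof
    show "(\<Union>m. C m) \<subseteq> a"
    proof
      fix x assume "x \<in> (\<Union>m. C m)"
      then obtain m where "x \<in> B (prod_decode m)" unfolding C_def by auto
      then obtain n i where "i < k n" "x \<in> e n i" unfolding B_def by (auto split: if_splits)
      then have "x \<in> D n" using eF F(2) by auto
      then show "x \<in> a" using un by auto
    qed
  next
    show "a \<subseteq> (\<Union>m. C m)"
    proof
      fix x assume "x \<in> a"
      then obtain n where "x \<in> D n" using un by auto
      then obtain c where c: "c \<in> F n" "x \<in> c" using F(2) by auto
      have "c \<in> e n ` {..<k n}" using e[of n] c(1) unfolding bij_betw_def k_def by simp
      then obtain i where i: "i < k n" "e n i = c" by (auto elim!: imageE)
      have "C (prod_encode (n, i)) = c" unfolding C_def B_def using i by simp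
      then show "x \<in> (\<Union>m. C m)" using c by blast
    qed
  qed
  have s: "(\<lambda>m. v (C m)) sums v a"
    using ms_ca[OF ms CV Cdj] Cun a by simp
  have vnn: "0 \<le> v (C m)" for m using CV ms_nonneg[OF ms] by auto
  have e1: "(\<Sum>m. ennreal (v (C m))) = ennreal (v a)"
    using suminf_ennreal_eq[OF vnn s] .
  define f where "f p = ennreal (v (B p))" for p
  define g where "g n = (\<Sum>i. f (n, i))" for n
  have g_eq: "g n = ennreal (mur V v (D n))" for n
  proof -
    have "g n = (\<Sum>i<k n. f (n, i))"
      unfolding g_def by (rule suminf_finite) (auto simp: f_def B_def v_empty[OF ms])
    also have "\<dots> = (\<Sum>i<k n. ennreal (v (e n i)))" unfolding f_def B_def by simp
    also have "\<dots> = ennreal (\<Sum>i<k n. v (e n i))"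
      using BV ms_nonneg[OF ms] unfolding B_def by (intro sum_ennreal) (metis fst_conv snd_conv lessThan_iff)
    also have "(\<Sum>i<k n. v (e n i)) = (\<Sum>c\<in>F n. v c)"
      using sum.reindex_bij_betw[OF e[of n], of v] unfolding k_def by simp
    also have "\<dots> = mur V v (D n)" using mur_eq[OF ms F(1)[of n]] F(2)[of n] by simp
    finally show ?thesis .
  qed
  have "(\<Sum>m. f (prod_decode m)) = suminf g"
    by (rule suminf_ennreal_2dimen) (simp add: g_def)
  then have e2: "(\<Sum>n. ennreal (mur V v (D n))) = ennreal (v a)"
  proof -
    have "g = (\<lambda>n. ennreal (mur V v (D n)))" using g_eq by (rule ext)
    then show ?thesis using e1 \<open>(\<Sum>m. f (prod_decode m)) = suminf g\<close> unfolding f_def C_def by simp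
  qed
  have mnn: "0 \<le> mur V v (D n)" for n using mur_nonneg[OF ms D] .
  have "(\<lambda>n. ennreal (mur V v (D n))) sums ennreal (v a)"
    using summable_sums[OF summableI, of "\<lambda>n. ennreal (mur V v (D n))"] e2 by simp
  then show ?thesis using mnn ms_nonneg[OF ms a] by simp
qed

lemma mur_ca:
  assumes ms: "measure_space_pr V v"
  shows "countably_additive (ringV V) (\<lambda>a. ennreal (mur V v a))"
  unfolding countably_additive_def
proof (intro allI impI)
  fix B :: "nat \<Rightarrow> 'a set"
  assume B: "range B \<subseteq> ringV V" and dj: "disjoint_family B" and U: "\<Union>(range B) \<in> ringV V"
  have pr: "prering V" using ms by (rule ms_prering)
  from U obtain FA where FA: "dec V FA" "\<Union>(range B) = \<Union>FA" by (rule ringV_E)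
  have finFA: "finite FA" using FA by (simp add: dec_def)
  have s1: "(\<lambda>n. mur V v (B n \<inter> a)) sums v a" if a: "a \<in> FA" for a
  proof (rule CAV[OF ms])
    show aV: "a \<in> V" using a FA by (auto simp: dec_def)
    show "B n \<inter> a \<in> ringV V" for n using B ringV_Int[OF pr _ ringV_V[OF aV]] by auto
    show "disjoint_family (\<lambda>n. B n \<inter> a)" using dj unfolding disjoint_family_on_def by auto
    show "(\<Union>n. B n \<inter> a) = a" using FA(2) a by auto
  qed
  have s2: "(\<lambda>n. \<Sum>a\<in>FA. mur V v (B n \<inter> a)) sums (\<Sum>a\<in>FA. v a)"
    by (rule sums_sum) (rule s1)
  have eqn: "(\<Sum>a\<in>FA. mur V v (B n \<inter> a)) = mur V v (B n)" for n
  proof -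
    have "B n = (\<Union>a\<in>FA. B n \<inter> a)" using FA(2) by auto
    moreover have "mur V v (\<Union>a\<in>FA. B n \<inter> a) = (\<Sum>a\<in>FA. mur V v (B n \<inter> a))"
    proof (rule mur_sum[OF ms finFA])
      show "B n \<inter> a \<in> ringV V" if "a \<in> FA" for a
        using that FA(1) B ringV_Int[OF pr _ ringV_V] by (auto simp: dec_def)
      show "disjoint_family_on (\<lambda>a. B n \<inter> a) FA"
        using FA(1) unfolding dec_def disjoint_family_on_def disjoint_def by auto
    qed
    ultimately show ?thesis by simp
  qed
  have s3: "(\<lambda>n. mur V v (B n)) sums mur V v (\<Union>(range B))"
    using s2 eqn mur_eq[OF ms FA(1)] FA(2) by simp
  have nn: "0 \<le> mur V v (B n)" for n using mur_nonneg[OF ms] B by auto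
  have "(\<lambda>n. ennreal (mur V v (B n))) sums ennreal (mur V v (\<Union>(range B)))"
    using s3 nn mur_nonneg[OF ms U] by simp
  then show "(\<Sum>i. ennreal (mur V v (B i))) = ennreal (mur V v (\<Union>(range B)))"
    by (rule sums_unique[symmetric])
qed

lemma exists_measure:
  assumes ms: "measure_space_pr V v"
  shows "\<exists>M. space M = UNIV \<and> V \<subseteq> sets M \<and> (\<forall>a\<in>V. emeasure M a = ennreal (v a))"
proof -
  have pr: "prering V" using ms by (rule ms_prering)
  interpret R: ring_of_sets UNIV "ringV V" by (rule ring_ringV[OF pr])
  have pos: "positive (ringV V) (\<lambda>a. ennreal (mur V v a))"
    unfolding positive_def using mur_V[OF ms prering_empty[OF pr]] v_empty[OF ms] by simp
  obtain mu where mu: "\<forall>s\<in>ringV V. mu s = ennreal (mur V v s)"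
    and msp: "measure_space UNIV (sigma_sets UNIV (ringV V)) mu"
    using R.caratheodory'[OF pos mur_ca[OF ms]] by blast
  define M where "M = measure_of UNIV (sigma_sets UNIV (ringV V)) mu"
  have sa: "sigma_algebra UNIV (sigma_sets UNIV (ringV V))" using msp by (simp add: measure_space_def)
  have sp: "space M = UNIV" unfolding M_def by (simp add: space_measure_of_conv)
  have st: "sets M = sigma_sets UNIV (ringV V)"
    unfolding M_def by (rule sigma_algebra.sets_measure_of_eq[OF sa])
  have VM: "V \<subseteq> sets M" unfolding st using ringV_V by (auto intro: sigma_sets.Basic)
  have "emeasure M a = ennreal (v a)" if a: "a \<in> V" for a
  proof -
    have "emeasure M a = mu a" unfolding M_def
      using msp a ringV_V by (intro emeasure_measure_of_sigma[OF sa]) (auto simp: measure_space_def intro: sigma_sets.Basic)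
    also have "\<dots> = ennreal (mur V v a)" using mu a ringV_V by auto
    also have "\<dots> = ennreal (v a)" using mur_V[OF ms a] by simp
    finally show ?thesis .
  qed
  then show ?thesis using sp VM by blast
qed




definition goodM :: "'a set set \<Rightarrow> ('a set \<Rightarrow> real) \<Rightarrow> 'a measure \<Rightarrow> bool" where
  "goodM V v M \<longleftrightarrow> space M = UNIV \<and> V \<subseteq> sets M \<and> (\<forall>a\<in>V. emeasure M a = ennreal (v a))"

lemma exists_goodM: "measure_space_pr V v \<Longrightarrow> \<exists>M. goodM V v M"
  unfolding goodM_def by (rule exists_measure)

lemma null_to_M:
  assumes ms: "measure_space_pr V v" and M: "goodM V v M" and N: "null_set V v N"
  shows "\<exists>Z\<in>null_sets M. N \<subseteq> Z"
proof -
  have sp: "space M = UNIV" and VM: "V \<subseteq> sets M" and em: "\<And>a. a \<in> V \<Longrightarrow> emeasure M a = ennreal (v a)"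
    using M unfolding goodM_def by auto
  have "\<forall>n::nat. \<exists>A :: nat \<Rightarrow> 'a set. range A \<subseteq> V \<and> N \<subseteq> \<Union>(range A) \<and>
       summable (\<lambda>t. v (A t)) \<and> (\<Sum>t. v (A t)) < 1 / Suc n"
    using N unfolding null_set_def by auto
  from choice[OF this] obtain A where A0: "\<forall>n. range (A n) \<subseteq> V \<and> N \<subseteq> \<Union>(range (A n)) \<and>
       summable (\<lambda>t. v (A n t)) \<and> (\<Sum>t. v (A n t)) < 1 / Suc n" ..
  have A1: "range (A n) \<subseteq> V" "N \<subseteq> \<Union>(range (A n))" "summable (\<lambda>t. v (A n t))" "(\<Sum>t. v (A n t)) < 1 / Suc n" for n
    using A0 by blast+
  have AV: "\<And>n t. A n t \<in> V" using A1(1) by auto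
  have NA: "\<And>n. N \<subseteq> (\<Union>t. A n t)" and As: "\<And>n. summable (\<lambda>t. v (A n t))" and Al: "\<And>n. (\<Sum>t. v (A n t)) < 1 / Suc n"
    using A1(2-4) by auto
  define Z where "Z = (\<Inter>n. \<Union>t. A n t)"
  have UM: "(\<Union>t. A n t) \<in> sets M" for n
    using AV VM by (intro sets.countable_UN) auto
  have ZM: "Z \<in> sets M" unfolding Z_def
    using UM by (intro sets.countable_INT) auto
  have NZ: "N \<subseteq> Z" unfolding Z_def using NA by auto
  have bound: "emeasure M Z \<le> ennreal (1 / Suc n)" for n
  proof -
    have "emeasure M Z \<le> emeasure M (\<Union>t. A n t)"
      using UM by (intro emeasure_mono) (auto simp: Z_def)
    also have "\<dots> \<le> (\<Sum>t. emeasure M (A n t))"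
      using AV VM by (intro emeasure_subadditive_countably) auto
    also have "\<dots> = (\<Sum>t. ennreal (v (A n t)))" using em AV by simp
    also have "\<dots> = ennreal (\<Sum>t. v (A n t))"
      using As ms_nonneg[OF ms] AV by (intro suminf_ennreal2) auto
    also have "\<dots> \<le> ennreal (1 / Suc n)" using Al[of n] by (intro ennreal_leI) simp
    finally show ?thesis .
  qed
  have "emeasure M Z \<le> 0"
  proof (rule ennreal_le_epsilon)
    fix e :: real assume e: "0 < e"
    obtain n :: nat where "1 / e < n" using reals_Archimedean2 by blast
    then have "1 / Suc n < e" using e by (simp add: field_simps)
    then have "emeasure M Z \<le> ennreal e" using bound[of n] by (meson ennreal_leI less_imp_le order_trans)
    then show "emeasure M Z \<le> 0 + ennreal e" by simp
  qed
  then have "Z \<in> null_sets M" using ZM by auto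
  then show ?thesis using NZ by blast
qed

lemma ae_to_AE:
  assumes ms: "measure_space_pr V v" and M: "goodM V v M" and P: "almost_everywhere V v P"
  shows "AE x in M. P x"
proof -
  from P obtain N where N: "null_set V v N" "\<And>x. x \<notin> N \<Longrightarrow> P x" unfolding almost_everywhere_def by blast
  from null_to_M[OF ms M N(1)] obtain Z where Z: "Z \<in> null_sets M" "N \<subseteq> Z" by blast
  show ?thesis by (rule AE_I'[OF Z(1)]) (use N(2) Z(2) in auto)
qed

lemma SF_integral:
  fixes h :: "'a \<Rightarrow> real"
  assumes ms: "measure_space_pr V v" and M: "goodM V v M" and rep: "simple_rep V h k y A"
  shows "integrable M h" and "integral\<^sup>L M h = (\<Sum>i<k. v (A i) *\<^sub>R y i)"
proof -
  have VM: "V \<subseteq> sets M" and em: "\<And>a. a \<in> V \<Longrightarrow> emeasure M a = ennreal (v a)"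
    and sp: "space M = UNIV"
    using M unfolding goodM_def by auto
  have AV: "\<And>i. i < k \<Longrightarrow> A i \<in> V" and heq: "h = (\<lambda>x. \<Sum>i<k. indicator (A i) x *\<^sub>R y i)"
    using rep unfolding simple_rep_def by auto
  have iA: "integrable M (\<lambda>x. indicator (A i) x *\<^sub>R y i)" if "i < k" for i
    using AV[OF that] VM em[OF AV[OF that]] by (intro integrable_indicator) auto
  show "integrable M h" unfolding heq
    by (rule Bochner_Integration.integrable_sum) (use iA in auto)
  have "integral\<^sup>L M h = (\<Sum>i<k. integral\<^sup>L M (\<lambda>x. indicator (A i) x *\<^sub>R y i))"
    unfolding heq by (rule Bochner_Integration.integral_sum) (use iA in auto)
  also have "\<dots> = (\<Sum>i<k. v (A i) *\<^sub>R y i)"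
  proof (rule sum.cong[OF refl])
    fix i assume "i \<in> {..<k}"
    then have i: "i < k" by simp
    have ii: "integrable M (indicator (A i) :: 'a \<Rightarrow> real)"
      using integrable_indicator[of "A i" M "1::real"] AV[OF i] VM em[OF AV[OF i]] by auto
    have "integral\<^sup>L M (\<lambda>x. indicator (A i) x *\<^sub>R y i) = integral\<^sup>L M (indicator (A i)) *\<^sub>R y i"
      by (rule integral_scaleR_left) (use ii in simp)
    also have "integral\<^sup>L M (indicator (A i) :: 'a \<Rightarrow> real) = measure M (A i)"
      using sp by simp
    also have "measure M (A i) = v (A i)"
      using em[OF AV[OF i]] ms_nonneg[OF ms AV[OF i]] by (simp add: measure_def)
    finally show "integral\<^sup>L M (\<lambda>x. indicator (A i) x *\<^sub>R y i) = v (A i) *\<^sub>R y i" .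
  qed
  finally show "integral\<^sup>L M h = (\<Sum>i<k. v (A i) *\<^sub>R y i)" .
qed

lemma SF_integral_eq:
  fixes h :: "'a \<Rightarrow> real"
  assumes ms: "measure_space_pr V v" and M: "goodM V v M" and h: "h \<in> simple_funs V"
  shows "integrable M h" and "simple_integral V v h = integral\<^sup>L M h"
proof -
  from h obtain k y A where rep: "simple_rep V h k y A" unfolding simple_funs_def by blast
  show "integrable M h" by (rule SF_integral(1)[OF ms M rep])
  have ex: "\<exists>I. \<exists>k y A. simple_rep V h k y A \<and> I = (\<Sum>i<k. v (A i) *\<^sub>R y i)" using rep by blast
  have "\<exists>k y A. simple_rep V h k y A \<and> simple_integral V v h = (\<Sum>i<k. v (A i) *\<^sub>R y i)"
    unfolding simple_integral_def by (rule someI_ex[OF ex])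
  then obtain k' y' A' where "simple_rep V h k' y' A'" "simple_integral V v h = (\<Sum>i<k'. v (A' i) *\<^sub>R y' i)"
    by blast
  then show "simple_integral V v h = integral\<^sup>L M h" using SF_integral(2)[OF ms M] by simp
qed

lemma SF_norm_eq:
  fixes h :: "'a \<Rightarrow> 'b::real_normed_vector"
  assumes ms: "measure_space_pr V v" and M: "goodM V v M" and h: "h \<in> simple_funs V"
  shows "integrable M (\<lambda>x. norm (h x))" and "simple_norm V v h = (\<integral>x. norm (h x) \<partial>M)"
  using SF_integral_eq[OF ms M SF_norm[OF h]] unfolding simple_norm_def by auto

lemma simple_norm_nonneg:
  fixes h :: "'a \<Rightarrow> 'b::real_normed_vector"
  assumes ms: "measure_space_pr V v" and h: "h \<in> simple_funs V"
  shows "0 \<le> simple_norm V v h"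
proof -
  obtain M where M: "goodM V v M" using exists_goodM[OF ms] by blast
  show ?thesis using SF_norm_eq[OF ms M h] by simp
qed




lemma div_null:
  fixes h :: "nat \<Rightarrow> 'a \<Rightarrow> 'b::real_normed_vector"
  assumes ms: "measure_space_pr V v" and bi: "basic_increments V v h"
  shows "null_set V v {x. \<not> summable (\<lambda>i. norm (h i x))}"
proof -
  have hSF: "\<And>i. h i \<in> simple_funs V" using bi unfolding basic_increments_def by auto
  obtain M0 where M0: "\<And>n. simple_norm V v (h n) \<le> M0 / 4 ^ n" using bi unfolding basic_increments_def by auto
  have "\<forall>i. \<exists>t. simple_rep V (\<lambda>x. norm (h i x)) (fst t) (fst (snd t)) (snd (snd t)) \<and>
      simple_norm V v (h i) = (\<Sum>j<fst t. v (snd (snd t) j) *\<^sub>R fst (snd t) j)"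
  proof
    fix i
    from SF_norm[OF hSF[of i]] obtain k y A where "simple_rep V (\<lambda>x. norm (h i x)) k y A"
      unfolding simple_funs_def by blast
    then have ex: "\<exists>I. \<exists>k y A. simple_rep V (\<lambda>x. norm (h i x)) k y A \<and> I = (\<Sum>j<k. v (A j) *\<^sub>R y j)" by blast
    have "\<exists>k y A. simple_rep V (\<lambda>x. norm (h i x)) k y A \<and> simple_norm V v (h i) = (\<Sum>j<k. v (A j) *\<^sub>R y j)"
      unfolding simple_norm_def simple_integral_def by (rule someI_ex[OF ex])
    then obtain k y A where "simple_rep V (\<lambda>x. norm (h i x)) k y A \<and> simple_norm V v (h i) = (\<Sum>j<k. v (A j) *\<^sub>R y j)"
      by blast
    then show "\<exists>t. simple_rep V (\<lambda>x. norm (h i x)) (fst t) (fst (snd t)) (snd (snd t)) \<and>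
      simple_norm V v (h i) = (\<Sum>j<fst t. v (snd (snd t) j) *\<^sub>R fst (snd t) j)"
      by (intro exI[of _ "(k, y, A)"]) simp
  qed
  from choice[OF this] obtain T where T: "\<forall>i. simple_rep V (\<lambda>x. norm (h i x)) (fst (T i)) (fst (snd (T i))) (snd (snd (T i))) \<and>
      simple_norm V v (h i) = (\<Sum>j<fst (T i). v (snd (snd (T i)) j) *\<^sub>R fst (snd (T i)) j)" ..
  define kk where "kk i = fst (T i)" for i
  define yy where "yy i = fst (snd (T i))" for i
  define AA where "AA i = snd (snd (T i))" for i
  have rep: "simple_rep V (\<lambda>x. norm (h i x)) (kk i) (yy i) (AA i)" for i
    using T unfolding kk_def yy_def AA_def by blast
  have sn: "simple_norm V v (h i) = (\<Sum>j<kk i. v (AA i j) * yy i j)" for i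
    using T unfolding kk_def yy_def AA_def by simp
  have AV: "j < kk i \<Longrightarrow> AA i j \<in> V" for i j using rep[of i] unfolding simple_rep_def by auto
  have tnn: "0 \<le> v (AA i j) * yy i j" if j: "j < kk i" for i j
  proof (cases "AA i j = {}")
    case True then show ?thesis using v_empty[OF ms] by simp
  next
    case False
    then obtain x where "x \<in> AA i j" by blast
    then have "yy i j = norm (h i x)" using simple_rep_at[OF rep j] by simp
    then show ?thesis using ms_nonneg[OF ms AV[OF j]] by simp
  qed
  have M0nn: "0 \<le> M0" using M0[of 0] simple_norm_nonneg[OF ms hSF[of 0]] by simp
  define sel where "sel i j \<longleftrightarrow> j < kk i \<and> 1 / 2 ^ i < yy i j" for i j
  have bnd: "(\<Sum>j<kk i. if sel i j then v (AA i j) else 0) \<le> M0 / 2 ^ i" for i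
  proof -
    have "(\<Sum>j<kk i. if sel i j then v (AA i j) else 0) \<le> (\<Sum>j<kk i. 2 ^ i * (v (AA i j) * yy i j))"
    proof (rule sum_mono)
      fix j assume "j \<in> {..<kk i}"
      then have j: "j < kk i" by simp
      show "(if sel i j then v (AA i j) else 0) \<le> 2 ^ i * (v (AA i j) * yy i j)"
      proof (cases "sel i j")
        case True
        then have "1 < 2 ^ i * yy i j" unfolding sel_def by (simp add: field_simps)
        moreover have "0 \<le> v (AA i j)" using ms_nonneg[OF ms AV[OF j]] .
        ultimately have "v (AA i j) * 1 \<le> v (AA i j) * (2 ^ i * yy i j)"
          by (intro mult_left_mono) auto
        then show ?thesis using True by (simp add: algebra_simps)
      next
        case False
        then show ?thesis using tnn[OF j] by simp
      qed
    qed
    also have "\<dots> = 2 ^ i * simple_norm V v (h i)" by (simp add: sn sum_distrib_left)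
    also have "\<dots> \<le> 2 ^ i * (M0 / 4 ^ i)" using M0[of i] by (intro mult_left_mono) auto
    also have "\<dots> = M0 / 2 ^ i" by (simp add: power_mult_distrib[symmetric] field_simps flip: power_mult)
    finally show ?thesis .
  qed
  show ?thesis
    unfolding null_set_def
  proof (intro allI impI)
    fix \<epsilon> :: real assume eps: "0 < \<epsilon>"
    obtain Nn :: nat where Nn0: "2 * M0 / \<epsilon> < 2 ^ Nn" using real_arch_pow[of 2 "2 * M0 / \<epsilon>"] by auto
    have Nn: "2 * M0 / 2 ^ Nn < \<epsilon>" using Nn0 eps by (simp add: field_simps)
    define B where "B p = (if sel (fst p + Nn) (snd p) then AA (fst p + Nn) (snd p) else {})" for p
    define C where "C m = B (prod_decode m)" for m
    have Vempty: "{} \<in> V" by (rule prering_empty[OF ms_prering[OF ms]])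
    have BV: "B p \<in> V" for p using AV Vempty unfolding B_def sel_def by auto
    have CV: "range C \<subseteq> V" using BV unfolding C_def by (simp add: image_subset_iff)
    have cover: "{x. \<not> summable (\<lambda>i. norm (h i x))} \<subseteq> \<Union>(range C)"
    proof
      fix x assume x: "x \<in> {x. \<not> summable (\<lambda>i. norm (h i x))}"
      show "x \<in> \<Union>(range C)"
      proof (rule ccontr)
        assume nx: "x \<notin> \<Union>(range C)"
        have le: "norm (norm (h i x)) \<le> (1/2) ^ i" if i: "i \<ge> Nn" for i
        proof (cases "\<exists>j<kk i. x \<in> AA i j")
          case True
          then obtain j where j: "j < kk i" "x \<in> AA i j" by blast
          have hx: "norm (h i x) = yy i j" using simple_rep_at[OF rep j] by simp
          have "\<not> sel i j"
          proof
            assume s: "sel i j"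
            have "C (prod_encode (i - Nn, j)) = AA i j" unfolding C_def B_def using s i by simp
            then show False using nx j(2) by blast
          qed
          then have "yy i j \<le> 1 / 2 ^ i" using j unfolding sel_def by simp
          moreover have "0 \<le> yy i j" using hx norm_ge_zero by metis
          ultimately show ?thesis using hx by (simp add: power_one_over)
        next
          case False
          then have "norm (h i x) = 0" using simple_rep_out[OF rep] by blast
          then show ?thesis by simp
        qed
        have "summable (\<lambda>i. norm (h i x))"
          by (rule summable_comparison_test'[OF summable_geometric le]) auto
        then show False using x by simp
      qed
    qed
    define w where "w i j = (if sel (i + Nn) j then v (AA (i + Nn) j) else 0)" for i j
    have wnn: "0 \<le> w i j" for i j using ms_nonneg[OF ms] AV unfolding w_def sel_def by auto
    have vC: "v (C m) = w (fst (prod_decode m)) (snd (prod_decode m))" for m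
      unfolding C_def B_def w_def using v_empty[OF ms] by simp
    have vCnn: "0 \<le> v (C m)" for m using vC wnn by simp
    have inner: "(\<Sum>j. ennreal (w i j)) \<le> ennreal (M0 / 2 ^ (i + Nn))" for i
    proof -
      have "(\<Sum>j. ennreal (w i j)) = (\<Sum>j<kk (i + Nn). ennreal (w i j))"
        by (rule suminf_finite) (auto simp: w_def sel_def)
      also have "\<dots> = ennreal (\<Sum>j<kk (i + Nn). w i j)" using wnn by (intro sum_ennreal) auto
      also have "(\<Sum>j<kk (i + Nn). w i j) = (\<Sum>j<kk (i + Nn). if sel (i + Nn) j then v (AA (i + Nn) j) else 0)"
        unfolding w_def ..
      also have "ennreal \<dots> \<le> ennreal (M0 / 2 ^ (i + Nn))" by (intro ennreal_leI bnd)
      finally show ?thesis .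
    qed
    have geo: "(\<lambda>i. M0 / 2 ^ (i + Nn)) sums (2 * M0 / 2 ^ Nn)"
    proof -
      have "(\<lambda>i. (M0 / 2 ^ Nn) * (1/2) ^ i) sums ((M0 / 2 ^ Nn) * 2)"
        using sums_mult[OF geometric_sums[of "1/2::real"], of "M0 / 2 ^ Nn"] by simp
      moreover have "(\<lambda>i. (M0 / 2 ^ Nn) * (1/2) ^ i) = (\<lambda>i. M0 / 2 ^ (i + Nn))"
        by (rule ext) (simp add: power_add power_one_over field_simps)
      ultimately show ?thesis by (simp add: field_simps)
    qed
    have tot: "(\<Sum>m. ennreal (v (C m))) \<le> ennreal (2 * M0 / 2 ^ Nn)"
    proof -
      have "(\<Sum>m. ennreal (v (C m))) = (\<Sum>m. (\<lambda>p. ennreal (w (fst p) (snd p))) (prod_decode m))"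
        using vC by simp
      also have "\<dots> = (\<Sum>i. \<Sum>j. ennreal (w i j))"
        by (rule suminf_ennreal_2dimen) simp
      also have "\<dots> \<le> (\<Sum>i. ennreal (M0 / 2 ^ (i + Nn)))"
        by (intro suminf_le summableI inner)
      also have "\<dots> = ennreal (2 * M0 / 2 ^ Nn)"
        using M0nn by (intro suminf_ennreal_eq geo) auto
      finally show ?thesis .
    qed
    have summ: "summable (\<lambda>m. v (C m))"
      using tot vCnn by (intro summable_suminf_not_top) (auto simp: top_unique)
    have "ennreal (\<Sum>m. v (C m)) \<le> ennreal (2 * M0 / 2 ^ Nn)"
      using tot suminf_ennreal2[OF vCnn summ] by simp
    then have "(\<Sum>m. v (C m)) \<le> 2 * M0 / 2 ^ Nn" using M0nn by (simp add: ennreal_le_iff)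
    then have "(\<Sum>m. v (C m)) < \<epsilon>" using Nn by simp
    then show "\<exists>A :: nat \<Rightarrow> 'a set. range A \<subseteq> V \<and> {x. \<not> summable (\<lambda>i. norm (h i x))} \<subseteq> \<Union>(range A) \<and>
       summable (\<lambda>t. v (A t)) \<and> (\<Sum>t. v (A t)) < \<epsilon>"
      using CV cover summ by blast
  qed
qed


lemma dir1:
  fixes f :: "'a \<Rightarrow> 'b::real_normed_vector"
  assumes ms: "measure_space_pr V v" and fL: "f \<in> L_space V v"
  shows "\<exists>(s :: nat \<Rightarrow> 'a \<Rightarrow> 'b) g. (\<forall>n. s n \<in> simple_funs V) \<and> g \<in> G_set V v \<and>
       almost_everywhere V v (\<lambda>x. (\<lambda>n. s n x) \<longlonglongrightarrow> f x) \<and>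
       (\<forall>n. almost_everywhere V v (\<lambda>x. norm (s n x) \<le> g x))"
proof -
  have pr: "prering V" using ms by (rule ms_prering)
  from fL obtain h where bi: "basic_increments V v h"
    and conv: "almost_everywhere V v (\<lambda>x. (\<lambda>n. \<Sum>i\<le>n. h i x) \<longlonglongrightarrow> f x)"
    unfolding L_space_def by blast
  have hSF: "\<And>i. h i \<in> simple_funs V" using bi unfolding basic_increments_def by auto
  obtain M0 where M0: "\<And>n. simple_norm V v (h n) \<le> M0 / 4 ^ n" using bi unfolding basic_increments_def by auto
  define Z where "Z = {x. \<not> summable (\<lambda>i. norm (h i x))}"
  have Znull: "null_set V v Z" unfolding Z_def by (rule div_null[OF ms bi])
  define s where "s n = (\<lambda>x. \<Sum>i\<le>n. h i x)" for n
  define g where "g x = (if summable (\<lambda>i. norm (h i x)) then (\<Sum>i. norm (h i x)) else 0)" for x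
  define hn where "hn i = (\<lambda>x. norm (h i x))" for i
  have sSF: "s n \<in> simple_funs V" for n unfolding s_def by (rule SF_sum[OF pr hSF])
  have hnSF: "hn i \<in> simple_funs V" for i unfolding hn_def by (rule SF_norm[OF hSF])
  have bi2: "basic_increments V v hn"
    unfolding basic_increments_def
  proof (intro conjI allI exI)
    show "hn i \<in> simple_funs V" for i by (rule hnSF)
    show "simple_norm V v (hn n) \<le> M0 / 4 ^ n" for n
      using M0[of n] unfolding hn_def simple_norm_def by simp
  qed
  have gconv: "(\<lambda>n. \<Sum>i\<le>n. hn i x) \<longlonglongrightarrow> g x" if "x \<notin> Z" for x
  proof -
    have "summable (\<lambda>i. norm (h i x))" using that unfolding Z_def by simp
    then show ?thesis unfolding g_def hn_def using summable_LIMSEQ' by auto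
  qed
  have gL: "g \<in> L_space V v"
    unfolding L_space_def almost_everywhere_def using bi2 Znull gconv by blast
  have gnn: "0 \<le> g x" for x unfolding g_def by (auto intro: suminf_nonneg)
  have gG: "g \<in> G_set V v"
    unfolding G_set_def
  proof (intro CollectI conjI allI gL gnn exI[of _ "\<lambda>n x. \<Sum>i\<le>n. hn i x"])
    show "(\<lambda>x. \<Sum>i\<le>n. hn i x) \<in> simple_funs V" for n by (rule SF_sum[OF pr hnSF])
    show "(\<Sum>i\<le>n. hn i x) \<le> (\<Sum>i\<le>Suc n. hn i x)" for n x by (simp add: hn_def)
    show "almost_everywhere V v (\<lambda>x. (\<lambda>n. \<Sum>i\<le>n. hn i x) \<longlonglongrightarrow> g x)"
      unfolding almost_everywhere_def using Znull gconv by blast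
  qed
  have bound: "norm (s n x) \<le> g x" if "x \<notin> Z" for n x
  proof -
    have sm: "summable (\<lambda>i. norm (h i x))" using that unfolding Z_def by simp
    have "norm (s n x) \<le> (\<Sum>i\<le>n. norm (h i x))" unfolding s_def by (rule norm_sum)
    also have "\<dots> \<le> (\<Sum>i. norm (h i x))" by (rule sum_le_suminf[OF sm]) auto
    also have "\<dots> = g x" using sm unfolding g_def by simp
    finally show ?thesis .
  qed
  show ?thesis
  proof (intro exI conjI allI)
    show "s n \<in> simple_funs V" for n by (rule sSF)
    show "g \<in> G_set V v" by (rule gG)
    show "almost_everywhere V v (\<lambda>x. (\<lambda>n. s n x) \<longlonglongrightarrow> f x)" using conv unfolding s_def by simp
    show "almost_everywhere V v (\<lambda>x. norm (s n x) \<le> g x)" for n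
      unfolding almost_everywhere_def using Znull bound by blast
  qed
qed




lemma seq_sub:
  fixes X :: "nat \<Rightarrow> 'b::topological_space"
  assumes X: "X \<longlonglongrightarrow> L" and p: "\<And>i. i \<le> p i"
  shows "(\<lambda>i. X (p i)) \<longlonglongrightarrow> L"
proof -
  have "filterlim p at_top sequentially"
    by (rule filterlim_at_top_mono[OF filterlim_ident]) (use p in auto)
  then show ?thesis using filterlim_compose[OF X] by (simp add: at_top_def)
qed

lemma cauchy_int:
  fixes s :: "nat \<Rightarrow> 'a \<Rightarrow> 'b::real_normed_vector"
  assumes ms: "measure_space_pr V v" and M: "goodM V v M" and sSF: "\<And>n. s n \<in> simple_funs V"
    and H: "integrable M H" and dom: "AE x in M. \<forall>n. norm (s n x) \<le> H x"
    and conv: "AE x in M. (\<lambda>n. s n x) \<longlonglongrightarrow> f x"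
  shows "\<forall>e>0. \<exists>N. \<forall>n\<ge>N. \<forall>m\<ge>N. (\<integral>x. norm (s n x - s m x) \<partial>M) < e"
proof (rule ccontr)
  have pr: "prering V" using ms by (rule ms_prering)
  assume "\<not> ?thesis"
  then obtain e where e: "e > 0" and bad: "\<forall>N. \<exists>n\<ge>N. \<exists>m\<ge>N. e \<le> (\<integral>x. norm (s n x - s m x) \<partial>M)"
    by (auto simp: not_less)
  have "\<forall>N. \<exists>nm. fst nm \<ge> N \<and> snd nm \<ge> N \<and> e \<le> (\<integral>x. norm (s (fst nm) x - s (snd nm) x) \<partial>M)"
    using bad by force
  from choice[OF this] obtain pq where pq: "\<forall>N. fst (pq N) \<ge> N \<and> snd (pq N) \<ge> N \<and>
      e \<le> (\<integral>x. norm (s (fst (pq N)) x - s (snd (pq N)) x) \<partial>M)" ..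
  define p where "p N = fst (pq N)" for N
  define q where "q N = snd (pq N)" for N
  have p: "\<And>i. i \<le> p i" and q: "\<And>i. i \<le> q i" and ge: "\<And>i. e \<le> (\<integral>x. norm (s (p i) x - s (q i) x) \<partial>M)"
    using pq unfolding p_def q_def by auto
  define d where "d i = (\<lambda>x. norm (s (p i) x - s (q i) x))" for i
  have dint: "integrable M (d i)" for i
    unfolding d_def by (rule SF_norm_eq(1)[OF ms M SF_diff[OF pr sSF sSF]])
  have lim: "(\<lambda>i. integral\<^sup>L M (d i)) \<longlonglongrightarrow> integral\<^sup>L M (\<lambda>x. 0::real)"
  proof (rule integral_dominated_convergence[where w = "\<lambda>x. 2 * H x"])
    show "(\<lambda>x. 0::real) \<in> borel_measurable M" by simp
    show "d i \<in> borel_measurable M" for i using dint[of i] by auto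
    show "integrable M (\<lambda>x. 2 * H x)" using H by simp
    show "AE x in M. (\<lambda>i. d i x) \<longlonglongrightarrow> 0"
      using conv
    proof eventually_elim
      case (elim x)
      have "(\<lambda>i. s (p i) x) \<longlonglongrightarrow> f x" "(\<lambda>i. s (q i) x) \<longlonglongrightarrow> f x"
        using seq_sub[OF elim p] seq_sub[OF elim q] by auto
      then have "(\<lambda>i. norm (s (p i) x - s (q i) x)) \<longlonglongrightarrow> norm (f x - f x)"
        by (intro tendsto_norm tendsto_diff)
      then show ?case unfolding d_def by simp
    qed
    show "AE x in M. norm (d i x) \<le> 2 * H x" for i
      using dom
    proof eventually_elim
      case (elim x)
      have "norm (d i x) = norm (s (p i) x - s (q i) x)" unfolding d_def by simp
      also have "\<dots> \<le> norm (s (p i) x) + norm (s (q i) x)" by (rule norm_triangle_ineq4)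
      also have "\<dots> \<le> 2 * H x" using elim[rule_format, of "p i"] elim[rule_format, of "q i"] by simp
      finally show ?case .
    qed
  qed
  then have "(\<lambda>i. integral\<^sup>L M (d i)) \<longlonglongrightarrow> 0" by simp
  then obtain i where "integral\<^sup>L M (d i) < e"
    using e by (auto dest!: order_tendstoD(2)[where a = e] simp: eventually_sequentially) blast
  then show False using ge[of i] unfolding d_def by simp
qed


lemma dir2:
  fixes f :: "'a \<Rightarrow> 'b::real_normed_vector" and s :: "nat \<Rightarrow> 'a \<Rightarrow> 'b"
  assumes ms: "measure_space_pr V v" and sSF: "\<And>n. s n \<in> simple_funs V" and gG: "g \<in> G_set V v"
    and conv: "almost_everywhere V v (\<lambda>x. (\<lambda>n. s n x) \<longlonglongrightarrow> f x)"
    and bnd: "\<And>n. almost_everywhere V v (\<lambda>x. norm (s n x) \<le> g x)"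
  shows "f \<in> L_space V v"
proof -
  have pr: "prering V" using ms by (rule ms_prering)
  obtain M where M: "goodM V v M" using exists_goodM[OF ms] by blast
  from gG have "g \<in> L_space V v" unfolding G_set_def by blast
  then obtain k where bik: "basic_increments V v k"
    and kconv: "almost_everywhere V v (\<lambda>x. (\<lambda>n. \<Sum>i\<le>n. k i x) \<longlonglongrightarrow> g x)"
    unfolding L_space_def by blast
  have kSF: "\<And>i. k i \<in> simple_funs V" using bik unfolding basic_increments_def by auto
  obtain Mk where Mk: "\<And>n. simple_norm V v (k n) \<le> Mk / 4 ^ n" using bik unfolding basic_increments_def by auto
  have AE1: "AE x in M. (\<lambda>n. s n x) \<longlonglongrightarrow> f x" by (rule ae_to_AE[OF ms M conv])
  have AE2: "AE x in M. \<forall>n. norm (s n x) \<le> g x"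
    unfolding AE_all_countable using ae_to_AE[OF ms M bnd] by blast
  have AE3: "AE x in M. (\<lambda>n. \<Sum>i\<le>n. k i x) \<longlonglongrightarrow> g x" by (rule ae_to_AE[OF ms M kconv])
  have AE4: "AE x in M. summable (\<lambda>i. norm (k i x))"
  proof (rule ae_to_AE[OF ms M])
    show "almost_everywhere V v (\<lambda>x. summable (\<lambda>i. norm (k i x)))"
      unfolding almost_everywhere_def using div_null[OF ms bik] by blast
  qed
  define H where "H x = (\<Sum>i. norm (k i x))" for x
  have knint: "integrable M (\<lambda>x. norm (k i x))" for i by (rule SF_norm_eq(1)[OF ms M kSF])
  have Hint: "integrable M H"
    unfolding H_def
  proof (rule integrable_suminf)
    show "integrable M (\<lambda>x. norm (k i x))" for i by (rule knint)
    show "AE x in M. summable (\<lambda>i. norm (norm (k i x)))" using AE4 by simp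
    have "simple_norm V v (k i) = (\<integral>x. norm (k i x) \<partial>M)" for i by (rule SF_norm_eq(2)[OF ms M kSF])
    then have eq: "(\<integral>x. norm (norm (k i x)) \<partial>M) = simple_norm V v (k i)" for i by simp
    have "summable (\<lambda>i. simple_norm V v (k i))"
    proof (rule summable_comparison_test'[where g = "\<lambda>i. Mk * (1/4) ^ i" and N = 0])
      show "summable (\<lambda>i. Mk * (1/4) ^ i)" by (intro summable_mult summable_geometric) simp
      show "norm (simple_norm V v (k i)) \<le> Mk * (1/4) ^ i" for i
        using Mk[of i] simple_norm_nonneg[OF ms kSF[of i]] by (simp add: power_one_over)
    qed
    then show "summable (\<lambda>i. \<integral>x. norm (norm (k i x)) \<partial>M)" using eq by simp
  qed
  have dom: "AE x in M. \<forall>n. norm (s n x) \<le> H x"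
    using AE2 AE3 AE4
  proof eventually_elim
    case (elim x)
    have "g x \<le> H x"
    proof (rule LIMSEQ_le_const2[OF elim(2)], intro exI allI impI)
      fix n :: nat
      have "(\<Sum>i\<le>n. k i x) \<le> (\<Sum>i\<le>n. norm (k i x))" by (intro sum_mono) simp
      also have "\<dots> \<le> H x" unfolding H_def by (rule sum_le_suminf[OF elim(3)]) auto
      finally show "(\<Sum>i\<le>n. k i x) \<le> H x" .
    qed
    then show ?case using elim(1) by (auto intro: order_trans)
  qed
  have cauchy: "\<forall>e>0. \<exists>N. \<forall>n\<ge>N. \<forall>m\<ge>N. (\<integral>x. norm (s n x - s m x) \<partial>M) < e"
    by (rule cauchy_int[OF ms M sSF Hint dom AE1])
  have "\<forall>j::nat. \<exists>N. \<forall>n\<ge>N. \<forall>m\<ge>N. (\<integral>x. norm (s n x - s m x) \<partial>M) < 1 / 4 ^ j"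
    using cauchy by simp
  from choice[OF this] obtain N where N: "\<And>j n m. n \<ge> N j \<Longrightarrow> m \<ge> N j \<Longrightarrow> (\<integral>x. norm (s n x - s m x) \<partial>M) < 1 / 4 ^ j"
    by blast
  define nn where "nn j = (\<Sum>i\<le>j. N i) + j" for j
  have nn_N: "N j \<le> nn j" for j unfolding nn_def by (simp add: member_le_sum trans_le_add1)
  have nn_mono: "nn j \<le> nn (Suc j)" for j unfolding nn_def by simp
  have nn_ge: "j \<le> nn j" for j unfolding nn_def by simp
  define hh where "hh j = (if j = 0 then s (nn 0) else (\<lambda>x. s (nn j) x - s (nn (j - 1)) x))" for j
  have hhSF: "hh j \<in> simple_funs V" for j unfolding hh_def using sSF SF_diff[OF pr sSF sSF] by auto
  have psum: "(\<Sum>i\<le>j. hh i x) = s (nn j) x" for j x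
    by (induction j) (auto simp: hh_def)
  define Mb where "Mb = max 4 (simple_norm V v (hh 0))"
  have bi: "basic_increments V v hh"
    unfolding basic_increments_def
  proof (intro conjI allI exI[of _ Mb])
    show "hh n \<in> simple_funs V" for n by (rule hhSF)
    fix j
    show "simple_norm V v (hh j) \<le> Mb / 4 ^ j"
    proof (cases j)
      case 0
      then show ?thesis unfolding Mb_def by simp
    next
      case (Suc i)
      have "simple_norm V v (hh j) = (\<integral>x. norm (s (nn j) x - s (nn i) x) \<partial>M)"
        using SF_norm_eq(2)[OF ms M hhSF[of j]] Suc unfolding hh_def by simp
      also have "\<dots> < 1 / 4 ^ i"
        using N[of i "nn j" "nn i"] nn_N[of i] nn_mono[of i] Suc by simp
      also have "\<dots> = 4 / 4 ^ j" using Suc by simp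
      also have "\<dots> \<le> Mb / 4 ^ j" unfolding Mb_def by (intro divide_right_mono) auto
      finally show ?thesis by simp
    qed
  qed
  from conv obtain N0 where N0: "null_set V v N0" "\<And>x. x \<notin> N0 \<Longrightarrow> (\<lambda>n. s n x) \<longlonglongrightarrow> f x"
    unfolding almost_everywhere_def by blast
  have "almost_everywhere V v (\<lambda>x. (\<lambda>n. \<Sum>i\<le>n. hh i x) \<longlonglongrightarrow> f x)"
    unfolding almost_everywhere_def psum
    using N0 seq_sub[OF _ nn_ge] by blast
  then show ?thesis unfolding L_space_def using bi by blast
qed

theorem mainTheorem6:
  fixes V :: "'a set set" and v :: "'a set \<Rightarrow> real" and f :: "'a \<Rightarrow> 'b::banach"
  assumes "measure_space_pr V v"
  shows "f \<in> L_space V v \<longleftrightarrow>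
    (\<exists>(s :: nat \<Rightarrow> 'a \<Rightarrow> 'b) g. (\<forall>n. s n \<in> simple_funs V) \<and> g \<in> G_set V v \<and>
       almost_everywhere V v (\<lambda>x. (\<lambda>n. s n x) \<longlonglongrightarrow> f x) \<and>
       (\<forall>n. almost_everywhere V v (\<lambda>x. norm (s n x) \<le> g x)))"
  using dir1[OF assms] dir2[OF assms] by blast

end
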